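(* Let $C$ be a commutative ring and let $f(x_1,\dots,x_n,y_1,\dots,y_n,\vec t)$ be a polynomial in the free associative $C$-algebra on noncommuting indeterminates $x_i,y_i,t_j$ which is doubly alternating. Then $$f(x_1,\dots,x_n,y_1,\dots,y_n,\vec t)\equiv f(y_1,\dots,y_n,x_1,\dots,x_n,\vec t)\pmod{\mathcal{CAP}_{n+1}}.$$
   Context: Doubly alternating: multilinear in all $x_i,y_j$, alternating in $x_1,\dots,x_n$ and alternating in $y_1,\dots,y_n$ (interchanging two $x$'s, or two $y$'s, negates $f$). $\mathcal{CAP}_{n+1}$ is the T-ideal of the free algebra (smallest ideal stable under all substitutions) generated by $\mathrm{Cap}_{n+1}(x_1,\dots,x_{n+1};y_1,\dots,y_{n+1})=\sum_{\pi\in S_{n+1}}\operatorname{sgn}(\pi)x_{\pi(1)}y_1\cdots x_{\pi(n+1)}y_{n+1}$. *)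

theory Defs
  imports "HOL-Library.Poly_Mapping" "HOL-Combinatorics.Permutations"
begin

text \<open>Free associative algebra over a commutative ring 'c on countably many
noncommuting indeterminates (indexed by nat): finitely supported maps from
words (lists of indeterminates) to coefficients.\<close>

type_synonym 'c fpoly = "nat list \<Rightarrow>\<^sub>0 'c"

definition fconst :: "'c::comm_ring_1 \<Rightarrow> 'c fpoly" where
  "fconst c = Poly_Mapping.single [] c"

definition fvar :: "nat \<Rightarrow> 'c::comm_ring_1 fpoly" where
  "fvar i = Poly_Mapping.single [i] 1"

definition fmul :: "'c::comm_ring_1 fpoly \<Rightarrow> 'c fpoly \<Rightarrow> 'c fpoly" where
  "fmul p q = (\<Sum>u\<in>Poly_Mapping.keys p. \<Sum>v\<in>Poly_Mapping.keys q.
      Poly_Mapping.single (u @ v) (Poly_Mapping.lookup p u * Poly_Mapping.lookup q v))"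

definition fprod_list :: "'c::comm_ring_1 fpoly list \<Rightarrow> 'c fpoly" where
  "fprod_list ps = foldr fmul ps (fconst 1)"

definition fsubst :: "(nat \<Rightarrow> 'c::comm_ring_1 fpoly) \<Rightarrow> 'c fpoly \<Rightarrow> 'c fpoly" where
  "fsubst \<sigma> p = (\<Sum>w\<in>Poly_Mapping.keys p. fmul (fconst (Poly_Mapping.lookup p w)) (fprod_list (map \<sigma> w)))"

definition frename :: "(nat \<Rightarrow> nat) \<Rightarrow> 'c::comm_ring_1 fpoly \<Rightarrow> 'c fpoly" where
  "frename \<rho> p = fsubst (\<lambda>i. fvar (\<rho> i)) p"

definition vswap :: "nat \<Rightarrow> nat \<Rightarrow> nat \<Rightarrow> nat" where
  "vswap a b v = (if v = a then b else if v = b then a else v)"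

definition multilinear_in :: "nat list \<Rightarrow> 'c::comm_ring_1 fpoly \<Rightarrow> bool" where
  "multilinear_in vs f \<longleftrightarrow> (\<forall>w\<in>Poly_Mapping.keys f. \<forall>v\<in>set vs. count_list w v = 1)"

definition alternating_in :: "nat list \<Rightarrow> 'c::comm_ring_1 fpoly \<Rightarrow> bool" where
  "alternating_in vs f \<longleftrightarrow> (\<forall>i j. i < length vs \<longrightarrow> j < length vs \<longrightarrow> i \<noteq> j \<longrightarrow>
      frename (vswap (vs ! i) (vs ! j)) f = - f)"

definition doubly_alternating :: "nat list \<Rightarrow> nat list \<Rightarrow> 'c::comm_ring_1 fpoly \<Rightarrow> bool" where
  "doubly_alternating xs ys f \<longleftrightarrow>
     multilinear_in (xs @ ys) f \<and> alternating_in xs f \<and> alternating_in ys f"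

definition swap_xy :: "nat list \<Rightarrow> nat list \<Rightarrow> nat \<Rightarrow> nat" where
  "swap_xy xs ys v = (case map_of (zip xs ys @ zip ys xs) v of Some u \<Rightarrow> u | None \<Rightarrow> v)"

inductive_set Tideal :: "'c::comm_ring_1 fpoly set \<Rightarrow> 'c fpoly set" for S where
  gen: "s \<in> S \<Longrightarrow> s \<in> Tideal S"
| zero: "0 \<in> Tideal S"
| add: "a \<in> Tideal S \<Longrightarrow> b \<in> Tideal S \<Longrightarrow> a + b \<in> Tideal S"
| lmul: "a \<in> Tideal S \<Longrightarrow> fmul p a \<in> Tideal S"
| rmul: "a \<in> Tideal S \<Longrightarrow> fmul a p \<in> Tideal S"
| subst: "a \<in> Tideal S \<Longrightarrow> fsubst \<sigma> a \<in> Tideal S"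

text \<open>Capelli polynomial Cap_m with x_i = indeterminate i (i < m) and
y_i = indeterminate (m + i) (i < m):
sum over pi of sgn(pi) x_{pi(0)} y_0 x_{pi(1)} y_1 ... x_{pi(m-1)} y_{m-1}.\<close>
definition Cap :: "nat \<Rightarrow> 'c::comm_ring_1 fpoly" where
  "Cap m = (\<Sum>\<pi>\<in>{\<pi>. \<pi> permutes {..<m}}.
      fmul (fconst (of_int (sign \<pi>)))
        (fprod_list (concat (map (\<lambda>i. [fvar (\<pi> i), fvar (m + i)]) [0..<m]))))"

definition CAP :: "nat \<Rightarrow> 'c::comm_ring_1 fpoly set" where
  "CAP m = Tideal {Cap m}"

end

theory Submission
  imports Defs
begin
abbreviation "lk \<equiv> Poly_Mapping.lookup"
abbreviation "ks \<equiv> Poly_Mapping.keys"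

lemma lookup_fmul_single:
  "lk (fmul (Poly_Mapping.single u a) X) v =
     (if take (length u) v = u then a * lk X (drop (length u) v) else 0)"
proof (cases "a = 0")
  case True then show ?thesis by (simp add: fmul_def)
next
  case False
  have "lk (fmul (Poly_Mapping.single u a) X) v =
        (\<Sum>y\<in>ks X. (a * lk X y when u @ y = v))"
    using False by (simp add: fmul_def lookup_sum lookup_single)
  also have "\<dots> = (if take (length u) v = u then a * lk X (drop (length u) v) else 0)"
  proof (cases "take (length u) v = u")
    case True
    then have v: "v = u @ drop (length u) v" by (metis append_take_drop_id)
    have e: "u @ y = v \<longleftrightarrow> y = drop (length u) v" for y
      by (metis append_eq_conv_conj True)
    have "(\<Sum>y\<in>ks X. (a * lk X y when u @ y = v)) =
          (\<Sum>y\<in>ks X. (a * lk X y when y = drop (length u) v))"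
      by (simp add: e)
    also have "\<dots> = a * lk X (drop (length u) v)"
      by (cases "drop (length u) v \<in> ks X") (auto simp: when_def in_keys_iff)
    finally show ?thesis using True by simp
  next
    case False
    then show ?thesis by (auto simp: when_def intro!: sum.neutral)
  qed
  finally show ?thesis .
qed

lemma fconst_single: "fconst c = Poly_Mapping.single [] c"
  by (simp add: fconst_def)

lemma lookup_fmul_fconst: "lk (fmul (fconst c) X) v = c * lk X v"
  by (simp add: fconst_def lookup_fmul_single)

lemma fmul_single_single:
  "fmul (Poly_Mapping.single u a) (Poly_Mapping.single w b) = Poly_Mapping.single (u @ w) (a * b)"
  by (rule poly_mapping_eqI) (auto simp: lookup_fmul_single lookup_single when_def append_eq_conv_conj)

lemma fprod_list_singles:
  "fprod_list (map (\<lambda>i. Poly_Mapping.single (g i) 1) W) = Poly_Mapping.single (concat (map g W)) 1"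
  by (induction W) (simp_all add: fprod_list_def fconst_def fmul_single_single)

lemma fvar_single: "fvar i = Poly_Mapping.single [i] 1"
  by (simp add: fvar_def)

lemma lookup_fsubst:
  "lk (fsubst \<sigma> p) v = (\<Sum>w\<in>ks p. lk p w * lk (fprod_list (map \<sigma> w)) v)"
  by (simp add: fsubst_def lookup_sum lookup_fmul_fconst)

lemma sum_keys_singles:
  fixes s :: "'i \<Rightarrow> 'c::comm_ring_1"
  assumes "finite I"
  shows "(\<Sum>k\<in>ks (\<Sum>i\<in>I. Poly_Mapping.single (W i) (s i)). lk (\<Sum>i\<in>I. Poly_Mapping.single (W i) (s i)) k * h k)
       = (\<Sum>i\<in>I. s i * h (W i))"
proof -
  let ?X = "\<Sum>i\<in>I. Poly_Mapping.single (W i) (s i)"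
  have fin: "finite (ks ?X \<union> W ` I)" using assms by simp
  have "(\<Sum>k\<in>ks ?X. lk ?X k * h k) = (\<Sum>k\<in>ks ?X \<union> W ` I. lk ?X k * h k)"
    by (rule sum.mono_neutral_left) (use fin in \<open>auto simp: in_keys_iff\<close>)
  also have "\<dots> = (\<Sum>k\<in>ks ?X \<union> W ` I. \<Sum>i\<in>I. (s i * h k when W i = k))"
    by (intro sum.cong refl) (simp add: lookup_sum lookup_single sum_distrib_right when_def, intro sum.cong refl, simp)
  also have "\<dots> = (\<Sum>i\<in>I. \<Sum>k\<in>ks ?X \<union> W ` I. (s i * h k when W i = k))"
    by (rule sum.swap)
  also have "\<dots> = (\<Sum>i\<in>I. s i * h (W i))"
  proof (rule sum.cong[OF refl])
    fix i assume "i \<in> I"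
    then have "W i \<in> ks ?X \<union> W ` I" by auto
    then show "(\<Sum>k\<in>ks ?X \<union> W ` I. (s i * h k when W i = k)) = s i * h (W i)"
      using fin by (simp add: when_def sum.delta)
  qed
  finally show ?thesis .
qed

lemma lookup_frename:
  assumes "\<And>x. \<rho> (\<rho> x) = x"
  shows "lk (frename \<rho> p) v = lk p (map \<rho> v)"
proof -
  have m: "map \<rho> w = v \<longleftrightarrow> w = map \<rho> v" for w
    using assms by (auto simp: comp_def map_idI) 
  have fp: "fprod_list (map (\<lambda>i. Poly_Mapping.single [\<rho> i] 1) W) = Poly_Mapping.single (map \<rho> W) 1" for W
    using fprod_list_singles[of "\<lambda>i. [\<rho> i]" W] by (simp add: map_concat)
  have "lk (frename \<rho> p) v = (\<Sum>w\<in>ks p. lk p w * (1 when map \<rho> w = v))"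
    unfolding frename_def lookup_fsubst fvar_single fp by (simp add: lookup_single)
  also have "\<dots> = (\<Sum>w\<in>ks p. (lk p w when w = map \<rho> v))"
    by (simp add: m when_def if_distrib cong: if_cong)
  also have "\<dots> = lk p (map \<rho> v)"
    by (cases "map \<rho> v \<in> ks p") (auto simp: when_def in_keys_iff)
  finally show ?thesis .
qed


definition capw :: "nat \<Rightarrow> (nat \<Rightarrow> nat) \<Rightarrow> nat list" where
  "capw m \<pi> = concat (map (\<lambda>i. [\<pi> i, m + i]) [0..<m])"

lemma cc: "concat (concat (map (\<lambda>x. [[a x], [b x]]) xs)) = concat (map (\<lambda>x. [a x, b x]) xs)"
  by (induction xs) auto

lemma Cap_singles:
  "Cap m = (\<Sum>\<pi>\<in>{\<pi>. \<pi> permutes {..<m}}. Poly_Mapping.single (capw m \<pi>) (of_int (sign \<pi>)))"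
proof -
  have "fprod_list (concat (map (\<lambda>i. [fvar (\<pi> i), fvar (m + i)]) [0..<m])) =
        Poly_Mapping.single (capw m \<pi>) (1::'a::comm_ring_1)" for \<pi>
    using fprod_list_singles[of "\<lambda>i. [i]" "capw m \<pi>"] cc[of "\<lambda>i. \<pi> i" "\<lambda>i. m + i" "[0..<m]"]
    by (simp add: capw_def fvar_single map_concat comp_def)
  then show ?thesis
    unfolding Cap_def by (simp add: fconst_single fmul_single_single)
qed

lemma finite_permutes_lessThan: "finite {\<pi>. \<pi> permutes {..<(m::nat)}}"
  by (rule finite_permutations) simp

subsection \<open>Closure properties of T-ideals\<close>

lemma Tideal_smul: "a \<in> Tideal S \<Longrightarrow> fmul (fconst c) a \<in> Tideal S"
  by (rule Tideal.lmul)

lemma Tideal_scaled: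
  assumes "a \<in> Tideal S" "\<And>v. lk b v = c * lk a v"
  shows "b \<in> Tideal S"
proof -
  have "b = fmul (fconst c) a"
    by (rule poly_mapping_eqI) (simp add: assms(2) lookup_fmul_fconst)
  then show ?thesis using assms(1) by (simp add: Tideal.lmul)
qed

lemma Tideal_uminus: "a \<in> Tideal S \<Longrightarrow> - a \<in> Tideal S"
  by (rule Tideal_scaled[where c = "-1"]) auto

lemma Tideal_diff: "a \<in> Tideal S \<Longrightarrow> b \<in> Tideal S \<Longrightarrow> a - b \<in> Tideal S"
  using Tideal.add[OF _ Tideal_uminus] by (metis diff_conv_add_uminus)

lemma Tideal_sum: "finite I \<Longrightarrow> (\<And>i. i \<in> I \<Longrightarrow> a i \<in> Tideal S) \<Longrightarrow> sum a I \<in> Tideal S"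
  by (induction I rule: finite_induct) (auto intro: Tideal.zero Tideal.add)

subsection \<open>Decomposition of words\<close>

lemma decomp_zip:
  "\<exists>w0 us. length us = length (filter P w) \<and>
     w = w0 @ concat (map (\<lambda>(z, u). z # u) (zip (filter P w) us)) \<and>
     (\<forall>x\<in>set w0. \<not> P x) \<and> (\<forall>u\<in>set us. \<forall>x\<in>set u. \<not> P x)"
proof (induction w)
  case Nil
  then show ?case by (intro exI[of _ "[]"]) auto
next
  case (Cons a w)
  then obtain w0 us where h: "length us = length (filter P w)"
     "w = w0 @ concat (map (\<lambda>(z, u). z # u) (zip (filter P w) us))"
     "\<forall>x\<in>set w0. \<not> P x" "\<forall>u\<in>set us. \<forall>x\<in>set u. \<not> P x" by blast
  show ?case
  proof (cases "P a")
    case True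
    then show ?thesis using h
      by (intro exI[of _ "[]"] exI[of _ "w0 # us"]) auto
  next
    case False
    then show ?thesis using h
      by (intro exI[of _ "a # w0"] exI[of _ "us"]) auto
  qed
qed

lemma zip_as_map: "length us = length F \<Longrightarrow> zip F us = map (\<lambda>i. (F ! i, us ! i)) [0..<length F]"
  by (rule nth_equalityI) auto

definition Vw :: "nat list \<Rightarrow> nat list list \<Rightarrow> (nat \<Rightarrow> nat) \<Rightarrow> nat list" where
  "Vw F us \<pi> = concat (map (\<lambda>i. F ! (\<pi> i) # us ! i) [0..<length F])"

lemma decomp:
  "\<exists>w0 us. length us = length (filter P w) \<and>
     w = w0 @ Vw (filter P w) us id \<and>
     (\<forall>x\<in>set w0. \<not> P x) \<and> (\<forall>u\<in>set us. \<forall>x\<in>set u. \<not> P x)"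
  using decomp_zip[of P w] by (auto simp: Vw_def zip_as_map comp_def; blast)

lemma transpose_nth:
  assumes "distinct F" "i < length F" "j < length F" "k < length F"
  shows "Transposition.transpose (F ! i) (F ! j) (F ! k) = F ! (Transposition.transpose i j k)"
  using assms by (auto simp: Transposition.transpose_def nth_eq_iff_index_eq)

lemma Vw_transpose:
  assumes "distinct F" "i < length F" "j < length F" "length us = length F"
    "\<forall>u\<in>set us. \<forall>x\<in>set u. x \<notin> set F" "\<pi> permutes {..<length F}"
  shows "map (Transposition.transpose (F ! i) (F ! j)) (Vw F us \<pi>) = Vw F us (Transposition.transpose i j \<circ> \<pi>)"
proof -
  have pi: "\<pi> k < length F" if "k < length F" for k
    using assms(6) that permutes_in_image by fastforce
  have us: "map (Transposition.transpose (F ! i) (F ! j)) (us ! k) = us ! k" if "k < length F" for k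
  proof (rule map_idI)
    fix x assume "x \<in> set (us ! k)"
    then have "x \<notin> set F" using assms(4,5) that by auto
    then show "Transposition.transpose (F ! i) (F ! j) x = x"
      using assms(2,3) by (auto simp: Transposition.transpose_def)
  qed
  show ?thesis unfolding Vw_def map_concat
    by (rule arg_cong[where f = concat]) (auto simp: us pi transpose_nth assms(1-3))
qed

lemma filter_Vw:
  assumes "length us = length F" "\<forall>u\<in>set us. \<forall>x\<in>set u. x \<notin> set F" "\<pi> permutes {..<length F}"
  shows "filter (\<lambda>x. x \<in> set F) (Vw F us \<pi>) = map (\<lambda>i. F ! (\<pi> i)) [0..<length F]"
proof -
  have pi: "\<pi> k < length F" if "k < length F" for k
    using assms(3) that permutes_in_image by fastforce
  have e: "filter (\<lambda>x. x \<in> set F) (us ! k) = []" if "k < length F" for k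
    using assms(1,2) that by (auto simp: filter_empty_conv)
  have "map (\<lambda>i. filter (\<lambda>x. x \<in> set F) (F ! (\<pi> i) # us ! i)) [0..<length F] = map (\<lambda>i. [F ! (\<pi> i)]) [0..<length F]"
    by (rule map_cong) (auto simp: pi e)
  then have "map (filter (\<lambda>x. x \<in> set F)) (map (\<lambda>i. F ! (\<pi> i) # us ! i) [0..<length F]) = map (\<lambda>i. [F ! (\<pi> i)]) [0..<length F]"
    by (simp only: map_map comp_def)
  then show ?thesis unfolding Vw_def filter_concat
    by (simp only: concat_map_singleton)
qed

lemma Vw_inj:
  assumes "distinct F" "length us = length F" "\<forall>u\<in>set us. \<forall>x\<in>set u. x \<notin> set F"
    "\<pi> permutes {..<length F}" "\<pi>' permutes {..<length F}" "Vw F us \<pi> = Vw F us \<pi>'"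
  shows "\<pi> = \<pi>'"
proof
  fix k
  show "\<pi> k = \<pi>' k"
  proof (cases "k < length F")
    case True
    have "map (\<lambda>i. F ! (\<pi> i)) [0..<length F] = map (\<lambda>i. F ! (\<pi>' i)) [0..<length F]"
      using filter_Vw[OF assms(2,3,4)] filter_Vw[OF assms(2,3,5)] assms(6) by metis
    then have "F ! (\<pi> k) = F ! (\<pi>' k)" using True by (metis map_eq_conv atLeastLessThan_iff set_upt zero_le)
    moreover have "\<pi> k < length F" "\<pi>' k < length F"
      using assms(4,5) True permutes_in_image by fastforce+
    ultimately show ?thesis using assms(1) by (simp add: nth_eq_iff_index_eq)
  next
    case False
    then show ?thesis using assms(4,5) by (simp add: permutes_not_in)
  qed
qed


lemma cc2: "concat (concat (map (\<lambda>x. [a x, b x]) xs)) = concat (map (\<lambda>x. a x @ b x) xs)"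
  by (induction xs) auto

lemma distinct_filter_count:
  "(\<forall>x. P x \<longrightarrow> count_list xs x \<le> 1) \<Longrightarrow> distinct (filter P xs)"
proof (induction xs)
  case Nil then show ?case by simp
next
  case (Cons a xs)
  have le: "count_list xs x \<le> count_list (a # xs) x" for x by simp
  have "\<forall>x. P x \<longrightarrow> count_list xs x \<le> 1"
    using Cons.prems le order_trans by blast
  then have d: "distinct (filter P xs)" by (rule Cons.IH)
  show ?case
  proof (cases "P a")
    case True
    then have "count_list xs a = 0" using Cons.prems by (auto split: if_splits)
    then show ?thesis using d True by (simp add: count_list_0_iff)
  next
    case False then show ?thesis using d by simp
  qed
qed

lemma map_transpose_free:
  assumes "\<forall>x\<in>set u. x \<notin> A" "a \<in> A" "b \<in> A"
  shows "map (Transposition.transpose a b) u = u"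
  using assms by (intro map_idI) (auto simp: Transposition.transpose_def)

lemma alt_in_CAP:
  fixes g :: "'a::comm_ring_1 fpoly"
  assumes zs: "distinct zs" "length zs = m"
  and ml: "\<forall>v\<in>ks g. \<forall>z\<in>set zs. count_list v z = 1"
  and alt: "\<forall>a b v. a \<in> set zs \<longrightarrow> b \<in> set zs \<longrightarrow> a \<noteq> b \<longrightarrow>
              lk g (map (Transposition.transpose a b) v) = - lk g v"
  shows "g \<in> Tideal {Cap m}"
  using ml alt
proof (induction "card (ks g)" arbitrary: g rule: less_induct)
  case less
  show ?case
  proof (cases "ks g = {}")
    case True
    then show ?thesis by (simp add: Tideal.zero)
  next
    case False
    then obtain w where w: "w \<in> ks g" by blast
    define P where "P = (\<lambda>x. x \<in> set zs)"
    define F where "F = filter P w"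
    obtain w0 us where d: "length us = length F" "w = w0 @ Vw F us id"
      "\<forall>x\<in>set w0. x \<notin> set zs" "\<forall>u\<in>set us. \<forall>x\<in>set u. x \<notin> set zs"
      using decomp[of P w] unfolding F_def P_def by blast
    have cnt: "\<forall>z\<in>set zs. count_list w z = 1" using less.prems(1) w by blast
    have Fd: "distinct F" unfolding F_def
      by (rule distinct_filter_count) (use cnt in \<open>auto simp: P_def\<close>)
    have setF: "set F = set zs"
    proof
      show "set F \<subseteq> set zs" by (auto simp: F_def P_def)
      show "set zs \<subseteq> set F"
      proof
        fix z assume "z \<in> set zs"
        then have "count_list w z = 1" using cnt by blast
        then have "z \<in> set w" using count_notin by fastforce
        then show "z \<in> set F" using \<open>z \<in> set zs\<close> by (simp add: F_def P_def)
      qed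
    qed
    have lenF: "length F = m"
      using Fd setF zs by (metis distinct_card)
    have us': "\<forall>u\<in>set us. \<forall>x\<in>set u. x \<notin> set F" using d(4) setF by simp
    define PP where "PP = {\<pi>. \<pi> permutes {..<m}}"
    have finPP: "finite PP" unfolding PP_def by (rule finite_permutes_lessThan)
    define gg where "gg = (\<lambda>j. if j < m then [F ! j] else us ! (j - m))"
    define \<sigma> :: "nat \<Rightarrow> 'a fpoly" where "\<sigma> = (\<lambda>j. Poly_Mapping.single (gg j) 1)"
    define g0 where "g0 = fmul (Poly_Mapping.single w0 1) (fsubst \<sigma> (Cap m))"
    have g0T: "g0 \<in> Tideal {Cap m}"
      unfolding g0_def by (intro Tideal.lmul Tideal.subst Tideal.gen) simp
    have capsub: "fprod_list (map \<sigma> (capw m \<pi>)) = Poly_Mapping.single (Vw F us \<pi>) 1"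
      if "\<pi> \<in> PP" for \<pi>
    proof -
      have pi: "\<pi> k < m" if "k < m" for k
        using \<open>\<pi> \<in> PP\<close> that permutes_in_image unfolding PP_def by fastforce
      have "concat (map gg (capw m \<pi>)) = concat (map (\<lambda>i. F ! (\<pi> i) # us ! i) [0..<m])"
      proof -
        have "concat (map gg (capw m \<pi>)) = concat (map (\<lambda>i. gg (\<pi> i) @ gg (m + i)) [0..<m])"
          unfolding capw_def map_concat by (simp add: cc2 comp_def)
        also have "map (\<lambda>i. gg (\<pi> i) @ gg (m + i)) [0..<m] = map (\<lambda>i. F ! (\<pi> i) # us ! i) [0..<m]"
          by (rule map_cong) (auto simp: gg_def pi)
        finally show ?thesis .
      qed
      then show ?thesis
        unfolding \<sigma>_def using fprod_list_singles[of gg "capw m \<pi>"] by (simp add: Vw_def lenF)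
    qed
    have lcap: "lk (fsubst \<sigma> (Cap m)) u = (\<Sum>\<pi>\<in>PP. of_int (sign \<pi>) * (1 when Vw F us \<pi> = u))" for u
    proof -
      have "lk (fsubst \<sigma> (Cap m)) u = (\<Sum>\<pi>\<in>PP. of_int (sign \<pi>) * lk (fprod_list (map \<sigma> (capw m \<pi>))) u)"
        unfolding lookup_fsubst Cap_singles PP_def[symmetric]
        by (rule sum_keys_singles[OF finPP])
      also have "\<dots> = (\<Sum>\<pi>\<in>PP. of_int (sign \<pi>) * (1 when Vw F us \<pi> = u))"
        by (intro sum.cong refl) (simp add: capsub lookup_single)
      finally show ?thesis .
    qed
    have lg0: "lk g0 v = (\<Sum>\<pi>\<in>PP. of_int (sign \<pi>) * (1 when v = w0 @ Vw F us \<pi>))" for v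
    proof (cases "take (length w0) v = w0")
      case True
      then have e: "v = w0 @ x \<longleftrightarrow> x = drop (length w0) v" for x
        by (metis append_eq_conv_conj)
      show ?thesis using True unfolding g0_def lookup_fmul_single lcap
        by (simp add: e)
    next
      case False
      then have "v \<noteq> w0 @ x" for x by auto
      then show ?thesis using False unfolding g0_def lookup_fmul_single by (simp add: when_def)
    qed
    have mapVw: "map (Transposition.transpose (F ! i) (F ! j)) (w0 @ Vw F us \<pi>) =
                 w0 @ Vw F us (Transposition.transpose i j \<circ> \<pi>)"
      if "i < m" "j < m" "\<pi> \<in> PP" for i j \<pi>
    proof -
      have "F ! i \<in> set zs" "F ! j \<in> set zs" using that setF lenF nth_mem by blast+
      then have "map (Transposition.transpose (F ! i) (F ! j)) w0 = w0"
        using d(3) by (intro map_transpose_free) auto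
      then show ?thesis using Vw_transpose[OF Fd _ _ d(1) us', of i j \<pi>] that
        by (simp add: lenF PP_def)
    qed
    have g0w: "lk g0 w = 1"
    proof -
      have idPP: "id \<in> PP" by (simp add: PP_def permutes_id)
      have "w = w0 @ Vw F us \<pi> \<longleftrightarrow> \<pi> = id" if "\<pi> \<in> PP" for \<pi>
      proof
        assume "w = w0 @ Vw F us \<pi>"
        then have "Vw F us \<pi> = Vw F us id" using d(2) by simp
        moreover have "\<pi> permutes {..<length F}" "id permutes {..<length F}"
          using that by (simp_all add: PP_def lenF permutes_id)
        ultimately show "\<pi> = id" using Vw_inj[OF Fd d(1) us'] by blast
      next
        assume "\<pi> = id" then show "w = w0 @ Vw F us \<pi>" using d(2) by simp
      qed
      then have "lk g0 w = (\<Sum>\<pi>\<in>PP. of_int (sign \<pi>) * (1 when \<pi> = id))"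
        unfolding lg0 by (intro sum.cong refl) simp
      also have "\<dots> = (\<Sum>\<pi>\<in>PP. if \<pi> = id then 1 else 0)"
        by (intro sum.cong refl) (simp add: when_def)
      also have "\<dots> = 1" using finPP idPP by simp
      finally show ?thesis .
    qed
    have g0alt: "lk g0 (map (Transposition.transpose a b) v) = - lk g0 v"
      if ab: "a \<in> set zs" "b \<in> set zs" "a \<noteq> b" for a b v
    proof -
      obtain i where i: "i < m" "F ! i = a" using ab(1) setF lenF by (metis in_set_conv_nth)
      obtain j where j: "j < m" "F ! j = b" using ab(2) setF lenF by (metis in_set_conv_nth)
      have ij: "i < m" "j < m" "F ! i = a" "F ! j = b" "i \<noteq> j"
        using i j ab(3) by auto
      define t where "t = Transposition.transpose i j"
      have tP: "t \<circ> \<pi> \<in> PP" if "\<pi> \<in> PP" for \<pi>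
        using that ij by (auto simp: PP_def t_def intro!: permutes_compose permutes_swap_id)
      have tt: "t \<circ> (t \<circ> \<pi>) = \<pi>" for \<pi>
        by (simp add: t_def comp_assoc[symmetric])
      have inv: "map (Transposition.transpose a b) (map (Transposition.transpose a b) x) = x" for x
        by (simp add: comp_def)
      have "(map (Transposition.transpose a b) v = w0 @ Vw F us \<pi>) \<longleftrightarrow>
            (v = w0 @ Vw F us (t \<circ> \<pi>))" if "\<pi> \<in> PP" for \<pi>
        using mapVw[OF ij(1,2) that] ij inv unfolding t_def by metis
      then have "lk g0 (map (Transposition.transpose a b) v) =
                 (\<Sum>\<pi>\<in>PP. of_int (sign \<pi>) * (1 when v = w0 @ Vw F us (t \<circ> \<pi>)))"
        unfolding lg0 by (intro sum.cong refl) simp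
      also have "\<dots> = (\<Sum>\<pi>\<in>PP. of_int (sign (t \<circ> \<pi>)) * (1 when v = w0 @ Vw F us \<pi>))"
        by (rule sum.reindex_bij_witness[where i = "\<lambda>\<pi>. t \<circ> \<pi>" and j = "\<lambda>\<pi>. t \<circ> \<pi>"])
           (auto simp: tP tt)
      also have "\<dots> = (\<Sum>\<pi>\<in>PP. - (of_int (sign \<pi>) * (1 when v = w0 @ Vw F us \<pi>)))"
      proof (intro sum.cong refl)
        fix \<pi> assume "\<pi> \<in> PP"
        then have "permutation \<pi>" unfolding PP_def
          using permutes_imp_permutation[OF finite_lessThan] by auto
        then have "sign (t \<circ> \<pi>) = - sign \<pi>"
          using ij by (simp add: t_def sign_compose permutation_swap_id sign_swap_id)
        then show "of_int (sign (t \<circ> \<pi>)) * (1 when v = w0 @ Vw F us \<pi>) =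
                   - (of_int (sign \<pi>) * (1 when v = w0 @ Vw F us \<pi>))" by simp
      qed
      also have "\<dots> = - lk g0 v" unfolding lg0 by (simp add: sum_negf)
      finally show ?thesis .
    qed
    define c where "c = lk g w"
    define h where "h = g - fmul (fconst c) g0"
    have lh: "lk h v = lk g v - c * lk g0 v" for v
      by (simp add: h_def lookup_minus lookup_fmul_fconst)
    have halt: "\<forall>a b v. a \<in> set zs \<longrightarrow> b \<in> set zs \<longrightarrow> a \<noteq> b \<longrightarrow>
              lk h (map (Transposition.transpose a b) v) = - lk h v"
      using less.prems(2) g0alt by (simp add: lh algebra_simps)
    have orbit: "lk h (w0 @ Vw F us \<pi>) = 0" if "\<pi> \<in> PP" for \<pi>
    proof -
      have "\<pi> permutes {..<m}" using that by (simp add: PP_def)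
      moreover have "finite {..<m}" by simp
      ultimately show ?thesis
      proof (induction rule: permutes_induct)
        case id
        have "lk h w = 0" using g0w by (simp add: lh c_def)
        then show ?case using d(2) unfolding id_def by simp
      next
        case (swap i j p)
        have "p \<in> PP" using swap by (simp add: PP_def)
        have "F ! i \<in> set zs" "F ! j \<in> set zs" "F ! i \<noteq> F ! j"
          using swap setF lenF Fd nth_mem by (auto simp: nth_eq_iff_index_eq)
        moreover have eq: "w0 @ Vw F us (Transposition.transpose i j \<circ> p) =
              map (Transposition.transpose (F ! i) (F ! j)) (w0 @ Vw F us p)"
          using mapVw[OF _ _ \<open>p \<in> PP\<close>, of i j] swap(1,2) by simp
        ultimately have "lk h (w0 @ Vw F us (Transposition.transpose i j \<circ> p)) = - lk h (w0 @ Vw F us p)"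
          using halt by (simp only: eq) blast
        then show ?case using swap.IH by (simp add: comp_def)
      qed
    qed
    have keysh: "ks h \<subseteq> ks g - {w}"
    proof
      fix v assume v: "v \<in> ks h"
      then have hv: "lk h v \<noteq> 0" by (simp add: in_keys_iff)
      have "lk g0 v = 0"
      proof (rule ccontr)
        assume "lk g0 v \<noteq> 0"
        have "\<exists>\<pi>\<in>PP. v = w0 @ Vw F us \<pi>"
        proof (rule ccontr)
          assume "\<not> (\<exists>\<pi>\<in>PP. v = w0 @ Vw F us \<pi>)"
          then have "lk g0 v = 0" unfolding lg0 by (intro sum.neutral) (auto simp: when_def)
          then show False using \<open>lk g0 v \<noteq> 0\<close> by simp
        qed
        then obtain \<pi> where "\<pi> \<in> PP" "v = w0 @ Vw F us \<pi>" by blast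
        then show False using orbit hv by simp
      qed
      then have "lk g v \<noteq> 0" using hv lh by simp
      moreover have "v \<noteq> w" using hv lh g0w by (auto simp: c_def)
      ultimately show "v \<in> ks g - {w}" by (simp add: in_keys_iff)
    qed
    then have "ks h \<subset> ks g" using w by blast
    then have "card (ks h) < card (ks g)" by (simp add: psubset_card_mono)
    moreover have "\<forall>v\<in>ks h. \<forall>z\<in>set zs. count_list v z = 1" using keysh less.prems(1) by blast
    ultimately have hT: "h \<in> Tideal {Cap m}" using less.hyps halt by blast
    have "g = h + fmul (fconst c) g0"
      by (rule poly_mapping_eqI) (simp add: lookup_add lh lookup_fmul_fconst)
    moreover have "fmul (fconst c) g0 \<in> Tideal {Cap m}" by (rule Tideal.lmul[OF g0T])
    ultimately show ?thesis using Tideal.add[OF hT] by simp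
  qed
qed


lemma involution_permutes:
  assumes "\<And>z. p (p z) = z" "\<And>z. z \<notin> A \<Longrightarrow> p z = z"
  shows "p permutes A"
  unfolding permutes_def
proof (intro conjI allI impI)
  fix x assume "x \<notin> A" then show "p x = x" by (rule assms(2))
next
  fix y show "\<exists>!x. p x = y"
  proof (rule ex1I[of _ "p y"])
    show "p (p y) = y" by (rule assms(1))
    fix x assume "p x = y" then show "x = p y" using assms(1)[of x] by simp
  qed
qed

lemma alt_perm:
  fixes c :: "nat list \<Rightarrow> 'a::comm_ring_1"
  assumes "finite A" "p permutes A"
    and alt: "\<And>a b v. a \<in> A \<Longrightarrow> b \<in> A \<Longrightarrow> a \<noteq> b \<Longrightarrow> c (map (Transposition.transpose a b) v) = - c v"
  shows "c (map p v) = of_int (sign p) * c v"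
  using assms(2,1)
proof (induction arbitrary: v rule: permutes_induct)
  case id
  then show ?case by simp
next
  case (swap a b p)
  have "permutation p" using swap(4) assms(1) by (rule permutes_imp_permutation[rotated])
  then have "sign (Transposition.transpose a b \<circ> p) = - sign p"
    using swap(3) by (simp add: sign_compose permutation_swap_id sign_swap_id)
  moreover have "c (map (Transposition.transpose a b \<circ> p) v) = - c (map p v)"
    using alt[OF swap(1,2,3), of "map p v"] by simp
  ultimately show ?case by (simp only: swap.IH) simp
qed

lemma alt_pres:
  fixes c :: "nat list \<Rightarrow> 'a::comm_ring_1"
  assumes fin: "finite X" "finite Y" and disj: "X \<inter> Y = {}"
    and p: "p permutes (X \<union> Y)" "p ` X = X"
    and altX: "\<And>a b v. a \<in> X \<Longrightarrow> b \<in> X \<Longrightarrow> a \<noteq> b \<Longrightarrow> c (map (Transposition.transpose a b) v) = - c v"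
    and altY: "\<And>a b v. a \<in> Y \<Longrightarrow> b \<in> Y \<Longrightarrow> a \<noteq> b \<Longrightarrow> c (map (Transposition.transpose a b) v) = - c v"
  shows "c (map p v) = of_int (sign p) * c v"
proof -
  have pU: "p ` (X \<union> Y) = X \<union> Y" using p(1) by (rule permutes_image)
  have injp: "inj p" using p(1) by (rule permutes_inj)
  have pY: "p ` Y = Y"
  proof -
    have "(X \<union> Y) - X = Y" using disj by blast
    then have "p ` Y = p ` ((X \<union> Y) - X)" by simp
    also have "\<dots> = p ` (X \<union> Y) - p ` X" using injp by (simp add: image_set_diff)
    also have "\<dots> = Y" using pU p(2) disj by auto
    finally show ?thesis .
  qed
  define pX where "pX = (\<lambda>z. if z \<in> X then p z else z)"
  define pY' where "pY' = (\<lambda>z. if z \<in> Y then p z else z)"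
  have bX: "bij_betw pX X X"
  proof -
    have "bij_betw p X X" using injp p(2) by (simp add: bij_betw_def inj_on_subset[OF injp])
    then show ?thesis by (rule bij_betw_cong[THEN iffD1, rotated]) (simp add: pX_def)
  qed
  have bY: "bij_betw pY' Y Y"
  proof -
    have "bij_betw p Y Y" using injp pY by (simp add: bij_betw_def inj_on_subset[OF injp])
    then show ?thesis by (rule bij_betw_cong[THEN iffD1, rotated]) (simp add: pY'_def)
  qed
  have permX: "pX permutes X" by (rule bij_imp_permutes[OF bX]) (simp add: pX_def)
  have permY: "pY' permutes Y" by (rule bij_imp_permutes[OF bY]) (simp add: pY'_def)
  have comp: "p = pX \<circ> pY'"
  proof
    fix z
    show "p z = (pX \<circ> pY') z"
    proof (cases "z \<in> Y")
      case True
      then have "p z \<in> Y" using pY by blast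
      then have "p z \<notin> X" using disj by blast
      then show ?thesis using True by (simp add: pX_def pY'_def)
    next
      case False
      show ?thesis
      proof (cases "z \<in> X")
        case True then show ?thesis using False by (simp add: pX_def pY'_def)
      next
        case False': False
        then have "p z = z" using False p(1) by (simp add: permutes_not_in)
        then show ?thesis using False False' by (simp add: pX_def pY'_def)
      qed
    qed
  qed
  have "permutation pX" "permutation pY'"
    using permX permY fin by (auto intro: permutes_imp_permutation)
  then have "sign p = sign pX * sign pY'" using comp by (simp add: sign_compose)
  moreover have "c (map p v) = c (map pX (map pY' v))" using comp by simp
  moreover have "c (map pX (map pY' v)) = of_int (sign pX) * c (map pY' v)"
    by (rule alt_perm[OF fin(1) permX altX])
  moreover have "c (map pY' v) = of_int (sign pY') * c v"
    by (rule alt_perm[OF fin(2) permY altY])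
  ultimately show ?thesis by simp
qed

lemma exists_swap:
  assumes "finite U" "X \<subseteq> U" "S \<subseteq> U" "card S = card X"
  shows "\<exists>p. p permutes U \<and> (\<forall>z. p (p z) = z) \<and> p ` X = S"
proof -
  have finX: "finite X" "finite S" using assms finite_subset by blast+
  have "card (X - S) = card (S - X)"
    using assms(4) finX by (simp add: card_Diff_subset_Int Int_commute)
  then obtain b where b: "bij_betw b (X - S) (S - X)"
    using finite_same_card_bij finX by blast
  define q where "q = inv_into (X - S) b"
  have q: "bij_betw q (S - X) (X - S)" unfolding q_def by (rule bij_betw_inv_into[OF b])
  define p where "p = (\<lambda>z. if z \<in> X - S then b z else if z \<in> S - X then q z else z)"
  have bq: "q (b z) = z" if "z \<in> X - S" for z
    using b that by (simp add: q_def bij_betw_inv_into_left)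
  have qb: "b (q z) = z" if "z \<in> S - X" for z
    using b that by (simp add: q_def bij_betw_inv_into_right)
  have bin: "b z \<in> S - X" if "z \<in> X - S" for z using b that bij_betwE by blast
  have qin: "q z \<in> X - S" if "z \<in> S - X" for z using q that bij_betwE by blast
  have inv: "p (p z) = z" for z
  proof -
    consider "z \<in> X - S" | "z \<in> S - X" | "z \<notin> X - S" "z \<notin> S - X" by blast
    then show ?thesis
    proof cases
      case 1 then show ?thesis using bin[OF 1] bq[OF 1] by (simp add: p_def)
    next
      case 2 then show ?thesis using qin[OF 2] qb[OF 2] by (auto simp: p_def)
    next
      case 3
      then have "p z = z" unfolding p_def by auto
      then show ?thesis by simp
    qed
  qed
  have "p permutes U"
    by (rule involution_permutes[OF inv]) (use assms(2,3) in \<open>auto simp: p_def\<close>)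
  moreover have "p ` X = S"
  proof -
    have "p ` X = p ` (X \<inter> S) \<union> p ` (X - S)" by blast
    also have "p ` (X \<inter> S) = X \<inter> S" by (auto simp: p_def image_iff)
    also have "p ` (X - S) = b ` (X - S)" by (auto simp: p_def)
    also have "b ` (X - S) = S - X" using b by (simp add: bij_betw_def)
    finally show ?thesis by blast
  qed
  ultimately show ?thesis using inv by blast
qed

lemma sum_pow_alt:
  assumes "finite C"
  shows "(\<Sum>K\<in>Pow C. (-1::int) ^ card K) = (if C = {} then 1 else 0)"
  using assms
proof (induction C rule: finite_induct)
  case empty then show ?case by simp
next
  case (insert x C)
  have inj: "inj_on (insert x) (Pow C)"
  proof (rule inj_onI)
    fix K1 K2 assume "K1 \<in> Pow C" "K2 \<in> Pow C" "insert x K1 = insert x K2"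
    moreover have "x \<notin> K1" "x \<notin> K2" using calculation(1,2) insert(2) by auto
    ultimately show "K1 = K2" using insert_ident by metis
  qed
  have disj: "Pow C \<inter> insert x ` Pow C = {}" using insert(2) by auto
  have fin: "finite (Pow C)" using insert(1) by simp
  have "(\<Sum>K\<in>Pow (insert x C). (-1::int) ^ card K) =
        (\<Sum>K\<in>Pow C. (-1::int) ^ card K) + (\<Sum>K\<in>insert x ` Pow C. (-1::int) ^ card K)"
    unfolding Pow_insert by (rule sum.union_disjoint) (use fin disj in auto)
  also have "(\<Sum>K\<in>insert x ` Pow C. (-1::int) ^ card K) = (\<Sum>K\<in>Pow C. (-1::int) ^ card (insert x K))"
    by (rule sum.reindex[OF inj, unfolded comp_def])
  also have "\<dots> = (\<Sum>K\<in>Pow C. - ((-1::int) ^ card K))"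
  proof (rule sum.cong[OF refl])
    fix K assume "K \<in> Pow C"
    then have "x \<notin> K" "finite K" using insert(1,2) finite_subset by auto
    then show "(-1::int) ^ card (insert x K) = - ((-1) ^ card K)" by simp
  qed
  finally show ?case by (simp add: sum_negf)
qed

lemma sum_supersets_alt:
  assumes "finite A" "B \<subseteq> A"
  shows "(\<Sum>T\<in>{T. B \<subseteq> T \<and> T \<subseteq> A}. (-1::int) ^ card T) = (if B = A then (-1) ^ card A else 0)"
proof -
  have finB: "finite B" using assms finite_subset by blast
  have img: "{T. B \<subseteq> T \<and> T \<subseteq> A} = (\<lambda>K. B \<union> K) ` Pow (A - B)"
  proof
    show "{T. B \<subseteq> T \<and> T \<subseteq> A} \<subseteq> (\<lambda>K. B \<union> K) ` Pow (A - B)"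
    proof
      fix T assume "T \<in> {T. B \<subseteq> T \<and> T \<subseteq> A}"
      then have "T = B \<union> (T - B)" "T - B \<in> Pow (A - B)" by auto
      then show "T \<in> (\<lambda>K. B \<union> K) ` Pow (A - B)" by blast
    qed
  qed (use assms in auto)
  have inj: "inj_on (\<lambda>K. B \<union> K) (Pow (A - B))" by (auto simp: inj_on_def)
  have "(\<Sum>T\<in>{T. B \<subseteq> T \<and> T \<subseteq> A}. (-1::int) ^ card T) = (\<Sum>K\<in>Pow (A - B). (-1::int) ^ card (B \<union> K))"
    unfolding img by (rule sum.reindex[OF inj, unfolded comp_def])
  also have "\<dots> = (\<Sum>K\<in>Pow (A - B). (-1::int) ^ card B * (-1) ^ card K)"
  proof (rule sum.cong[OF refl])
    fix K assume K: "K \<in> Pow (A - B)"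
    then have "finite K" "B \<inter> K = {}" using assms(1) finite_subset by auto
    then have "card (B \<union> K) = card B + card K" using finB by (simp add: card_Un_disjoint)
    then show "(-1::int) ^ card (B \<union> K) = (-1) ^ card B * (-1) ^ card K" by (simp add: power_add)
  qed
  also have "\<dots> = (-1) ^ card B * (if A - B = {} then 1 else 0)"
    using sum_pow_alt[of "A - B"] assms(1) by (simp add: sum_distrib_left[symmetric])
  also have "\<dots> = (if B = A then (-1) ^ card A else 0)" using assms(2) by auto
  finally show ?thesis .
qed


subsection \<open>The interchange permutation\<close>

lemma vswap_transpose: "vswap a b = Transposition.transpose a b"
  by (simp add: fun_eq_iff vswap_def Transposition.transpose_def)

lemma swap_xy_Nil: "swap_xy [] [] = id"
  by (simp add: fun_eq_iff swap_xy_def)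

lemma swap_xy_range:
  assumes "swap_xy xs ys v \<noteq> v" "length xs = length ys"
  shows "v \<in> set xs \<union> set ys \<and> swap_xy xs ys v \<in> set xs \<union> set ys"
proof -
  obtain u where u: "map_of (zip xs ys @ zip ys xs) v = Some u" "swap_xy xs ys v = u"
    using assms(1) by (cases "map_of (zip xs ys @ zip ys xs) v") (auto simp: swap_xy_def simp del: map_of_append)
  have "(v, u) \<in> set (zip xs ys @ zip ys xs)" by (rule map_of_SomeD[OF u(1)])
  then show ?thesis using u(2) by (auto dest: set_zip_leftD set_zip_rightD)
qed

lemma map_of_skip: "v \<noteq> y \<Longrightarrow> map_of (A @ (y, x) # B) v = map_of (A @ B) v"
  by (induction A) auto

lemma swap_xy_Cons:
  assumes "length xs = length ys" "distinct ((x # xs) @ (y # ys))"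
  shows "swap_xy (x # xs) (y # ys) = Transposition.transpose x y \<circ> swap_xy xs ys"
proof
  fix v
  have xy: "x \<notin> set xs" "x \<notin> set ys" "y \<notin> set xs" "y \<notin> set ys" "x \<noteq> y" using assms(2) by auto
  have sx: "swap_xy xs ys x = x" using swap_xy_range[OF _ assms(1), of x] xy by blast
  have sy: "swap_xy xs ys y = y" using swap_xy_range[OF _ assms(1), of y] xy by blast
  show "swap_xy (x # xs) (y # ys) v = (Transposition.transpose x y \<circ> swap_xy xs ys) v"
  proof (cases "v = x")
    case True then show ?thesis using sx by (simp add: swap_xy_def)
  next
    case False
    show ?thesis
    proof (cases "v = y")
      case True
      have "map_of (zip xs ys) y = None" using xy assms(1) by simp
      then have "map_of (zip xs ys @ (y, x) # zip ys xs) y = Some x" by (simp add: map_of_append map_add_def)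
      then show ?thesis using True False sy by (simp add: swap_xy_def)
    next
      case False': False
      have "swap_xy (x # xs) (y # ys) v = swap_xy xs ys v"
        using False False' by (simp add: swap_xy_def map_of_skip del: map_of_append)
      moreover have "swap_xy xs ys v \<noteq> x" "swap_xy xs ys v \<noteq> y"
        using swap_xy_range[OF _ assms(1), of v] xy False False' by auto
      ultimately show ?thesis by simp
    qed
  qed
qed

lemma swap_xy_props:
  assumes "length xs = length ys" "distinct (xs @ ys)"
  shows "(\<forall>z. swap_xy xs ys (swap_xy xs ys z) = z) \<and> swap_xy xs ys ` set xs = set ys \<and>
         permutation (swap_xy xs ys) \<and> sign (swap_xy xs ys) = (-1) ^ length xs"
  using assms
proof (induction xs ys rule: list_induct2)
  case Nil then show ?case by (simp add: swap_xy_Nil)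
next
  case (Cons x xs y ys)
  have d: "distinct (xs @ ys)" using Cons.prems by auto
  note IH = Cons.IH[OF d]
  have xy: "x \<notin> set xs" "x \<notin> set ys" "y \<notin> set xs" "y \<notin> set ys" "x \<noteq> y" using Cons.prems by auto
  define w where "w = swap_xy xs ys"
  have eq: "swap_xy (x # xs) (y # ys) = Transposition.transpose x y \<circ> w"
    unfolding w_def by (rule swap_xy_Cons[OF Cons.hyps Cons.prems])
  have wx: "w x = x" "w y = y" using swap_xy_range[OF _ Cons.hyps, of x] swap_xy_range[OF _ Cons.hyps, of y] xy
    by (auto simp: w_def)
  have winv: "w (w z) = z" for z using IH by (simp add: w_def)
  have wnot: "w z \<noteq> x" "w z \<noteq> y" if "z \<noteq> x" "z \<noteq> y" for z
    using that winv wx by metis+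
  have inv: "(Transposition.transpose x y \<circ> w) ((Transposition.transpose x y \<circ> w) z) = z" for z
  proof (cases "z = x \<or> z = y")
    case True then show ?thesis using wx xy by auto
  next
    case False
    then show ?thesis using wnot[of z] winv[of z] wnot[of "w z"] by (auto simp: Transposition.transpose_def)
  qed
  have img: "(Transposition.transpose x y \<circ> w) ` set (x # xs) = set (y # ys)"
  proof -
    have "w ` set xs = set ys" using IH by (simp add: w_def)
    moreover have "Transposition.transpose x y ` set ys = set ys"
      using xy by (auto simp: Transposition.transpose_def image_iff)
    ultimately have A: "(Transposition.transpose x y \<circ> w) ` set xs = set ys"
      by (simp only: image_comp[symmetric])
    have B: "(Transposition.transpose x y \<circ> w) x = y" using wx by simp
    have "(Transposition.transpose x y \<circ> w) ` set (x # xs) =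
          insert ((Transposition.transpose x y \<circ> w) x) ((Transposition.transpose x y \<circ> w) ` set xs)"
      by (simp only: list.set(2) image_insert)
    then show ?thesis by (simp only: A B list.set(2))
  qed
  have pw: "permutation w" using IH by (simp add: w_def)
  have s1: "sign (Transposition.transpose x y \<circ> w) = - sign w"
    using pw xy by (simp add: sign_compose permutation_swap_id sign_swap_id)
  have s2: "sign w = (-1) ^ length xs" using IH by (simp add: w_def)
  have sg: "sign (Transposition.transpose x y \<circ> w) = (-1) ^ length (x # xs)"
    by (simp only: s1 s2) simp
  have perm: "permutation (Transposition.transpose x y \<circ> w)"
    by (intro permutation_compose permutation_swap_id pw)
  show ?case unfolding eq using inv img perm sg by blast
qed


locale DA =
  fixes xs ys :: "nat list" and f :: "'a::comm_ring_1 fpoly"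
  assumes len: "length xs = length ys" and dist: "distinct (xs @ ys)"
    and ml: "\<forall>v\<in>ks f. \<forall>z\<in>set xs \<union> set ys. count_list v z = 1"
    and altX: "\<And>a b v. a \<in> set xs \<Longrightarrow> b \<in> set xs \<Longrightarrow> a \<noteq> b \<Longrightarrow>
                 lk f (map (Transposition.transpose a b) v) = - lk f v"
    and altY: "\<And>a b v. a \<in> set ys \<Longrightarrow> b \<in> set ys \<Longrightarrow> a \<noteq> b \<Longrightarrow>
                 lk f (map (Transposition.transpose a b) v) = - lk f v"
begin

abbreviation "X \<equiv> set xs"
abbreviation "Y \<equiv> set ys"
abbreviation "U \<equiv> set xs \<union> set ys"

lemma finU: "finite U" by simp

lemma disj: "X \<inter> Y = {}" using dist by auto

lemma cardX: "card X = length xs" using dist by (simp add: distinct_card)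
lemma cardY: "card Y = length xs" using dist len by (simp add: distinct_card)

lemma pres:
  assumes "p permutes U" "p ` X = X"
  shows "lk f (map p v) = of_int (sign p) * lk f v"
  by (rule alt_pres[OF _ _ disj assms altX altY]) simp_all

definition lam :: "nat set \<Rightarrow> nat \<Rightarrow> nat" where
  "lam S = (SOME p. p permutes U \<and> (\<forall>z. p (p z) = z) \<and> p ` X = S)"

lemma lam:
  assumes "S \<subseteq> U" "card S = card X"
  shows "lam S permutes U" "\<And>z. lam S (lam S z) = z" "lam S ` X = S" "lam S ` S = X"
proof -
  have "\<exists>p. p permutes U \<and> (\<forall>z. p (p z) = z) \<and> p ` X = S"
    by (rule exists_swap[OF finU _ assms(1,2)]) simp
  then have *: "lam S permutes U \<and> (\<forall>z. lam S (lam S z) = z) \<and> lam S ` X = S"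
    unfolding lam_def by (rule someI_ex)
  then show "lam S permutes U" "\<And>z. lam S (lam S z) = z" "lam S ` X = S" by auto
  have c: "lam S \<circ> lam S = id" using * by (auto simp: fun_eq_iff)
  have a: "lam S ` (lam S ` X) = X" by (simp only: image_comp c image_id id_apply)
  have e: "lam S ` X = S" using * by blast
  from a show "lam S ` S = X" by (simp only: e)
qed

lemma sign_sq: "of_int (sign p) * of_int (sign p) = (1::'a)"
  by (cases p rule: sign_cases) simp_all

definition SS :: "nat set \<Rightarrow> nat set set" where
  "SS T = {S. S \<subseteq> X \<union> T \<and> card S = card X}"

lemma SS_sub: "T \<subseteq> Y \<Longrightarrow> S \<in> SS T \<Longrightarrow> S \<subseteq> U \<and> card S = card X"
  by (auto simp: SS_def)

lemma finSS: "T \<subseteq> Y \<Longrightarrow> finite (SS T)"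
  by (rule finite_subset[of _ "Pow U"]) (auto simp: SS_def)

definition R :: "nat set \<Rightarrow> 'a fpoly" where
  "R T = (\<Sum>S\<in>SS T. fmul (fconst (of_int (sign (lam S)))) (frename (lam S) f))"

lemma lkR:
  assumes "T \<subseteq> Y"
  shows "lk (R T) v = (\<Sum>S\<in>SS T. of_int (sign (lam S)) * lk f (map (lam S) v))"
  unfolding R_def lookup_sum
proof (rule sum.cong[OF refl])
  fix S assume "S \<in> SS T"
  then have "S \<subseteq> U" "card S = card X" using SS_sub[OF assms] by auto
  then show "lk (fmul (fconst (of_int (sign (lam S)))) (frename (lam S) f)) v =
             of_int (sign (lam S)) * lk f (map (lam S) v)"
    by (simp add: lookup_fmul_fconst lookup_frename lam(2))
qed

lemma R_alt:
  assumes T: "T \<subseteq> Y" and pi: "\<pi> permutes (X \<union> T)"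
  shows "lk (R T) (map \<pi> v) = of_int (sign \<pi>) * lk (R T) v"
proof -
  have piU: "\<pi> permutes U" by (rule permutes_subset[OF pi]) (use T in auto)
  have injpi: "inj \<pi>" using pi by (rule permutes_inj)
  have surjpi: "surj \<pi>" using pi by (rule permutes_surj)
  have pim: "\<pi> ` (X \<union> T) = X \<union> T" using pi by (rule permutes_image)
  have ipi: "inv \<pi> permutes (X \<union> T)" using pi by (rule permutes_inv)
  have ipim: "inv \<pi> ` (X \<union> T) = X \<union> T" using ipi by (rule permutes_image)
  have injipi: "inj (inv \<pi>)" using ipi by (rule permutes_inj)
  have permpi: "permutation \<pi>" using piU by (rule permutes_imp_permutation[OF finU])
  let ?a = "\<lambda>S w. of_int (sign (lam S)) * lk f (map (lam S) w)"
  have inSS1: "\<pi> ` S \<in> SS T" if "S \<in> SS T" for S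
  proof -
    have "\<pi> ` S \<subseteq> X \<union> T" using that pim by (auto simp: SS_def)
    moreover have "card (\<pi> ` S) = card S" using injpi by (simp add: card_image inj_on_subset)
    ultimately show ?thesis using that by (simp add: SS_def)
  qed
  have inSS2: "inv \<pi> ` S \<in> SS T" if "S \<in> SS T" for S
  proof -
    have "inv \<pi> ` S \<subseteq> X \<union> T" using that ipim by (auto simp: SS_def)
    moreover have "card (inv \<pi> ` S) = card S" using injipi by (simp add: card_image inj_on_subset)
    ultimately show ?thesis using that by (simp add: SS_def)
  qed
  have "lk (R T) (map \<pi> v) = (\<Sum>S\<in>SS T. ?a S (map \<pi> v))" by (rule lkR[OF T])
  also have "\<dots> = (\<Sum>S'\<in>SS T. ?a (\<pi> ` S') (map \<pi> v))"
    by (rule sum.reindex_bij_witness[where i = "\<lambda>S'. \<pi> ` S'" and j = "\<lambda>S. inv \<pi> ` S"])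
       (auto simp: inSS1 inSS2 image_f_inv_f[OF surjpi] image_inv_f_f[OF injpi])
  also have "\<dots> = (\<Sum>S'\<in>SS T. of_int (sign \<pi>) * ?a S' v)"
  proof (rule sum.cong[OF refl])
    fix S' assume S': "S' \<in> SS T"
    define S where "S = \<pi> ` S'"
    have S: "S \<in> SS T" using inSS1[OF S'] by (simp add: S_def)
    have S'U: "S' \<subseteq> U" "card S' = card X" using SS_sub[OF T S'] by auto
    have SU: "S \<subseteq> U" "card S = card X" using SS_sub[OF T S] by auto
    define h where "h = lam S \<circ> \<pi> \<circ> lam S'"
    have hU: "h permutes U" unfolding h_def
      by (intro permutes_compose lam(1)[OF S'U] lam(1)[OF SU] piU)
    have hX: "h ` X = X" unfolding h_def
      by (simp only: image_comp[symmetric] lam(3)[OF S'U] lam(4)[OF SU] S_def[symmetric])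
    have pS: "permutation (lam S)" "permutation (lam S')"
      using lam(1)[OF SU] lam(1)[OF S'U] by (auto intro: permutes_imp_permutation[OF finU])
    have sh: "sign h = sign (lam S) * sign \<pi> * sign (lam S')"
      unfolding h_def by (simp add: sign_compose permutation_compose pS permpi)
    have eq: "map (lam S) (map \<pi> v) = map h (map (lam S') v)"
      by (simp add: h_def lam(2)[OF S'U])
    have "lk f (map (lam S) (map \<pi> v)) = of_int (sign h) * lk f (map (lam S') v)"
      unfolding eq by (rule pres[OF hU hX])
    then have "?a S (map \<pi> v) = of_int (sign (lam S)) * (of_int (sign h) * lk f (map (lam S') v))"
      by simp
    also have "\<dots> = (of_int (sign (lam S)) * of_int (sign (lam S))) * of_int (sign \<pi>) * ?a S' v"
      by (simp add: sh algebra_simps)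
    also have "\<dots> = of_int (sign \<pi>) * ?a S' v" by (simp add: sign_sq)
    finally show "?a (\<pi> ` S') (map \<pi> v) = of_int (sign \<pi>) * ?a S' v" by (simp add: S_def)
  qed
  also have "\<dots> = of_int (sign \<pi>) * lk (R T) v"
    by (simp add: lkR[OF T] sum_distrib_left)
  finally show ?thesis .
qed

lemma R_ml:
  assumes T: "T \<subseteq> Y"
  shows "\<forall>v\<in>ks (R T). \<forall>z\<in>U. count_list v z = 1"
proof (intro ballI)
  fix v z assume v: "v \<in> ks (R T)" and z: "z \<in> U"
  have "lk (R T) v \<noteq> 0" using v by (simp add: in_keys_iff)
  then obtain S where S: "S \<in> SS T" "lk f (map (lam S) v) \<noteq> 0"
    unfolding lkR[OF T] by (metis (no_types, lifting) mult_zero_right sum.neutral)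
  have SU: "S \<subseteq> U" "card S = card X" using SS_sub[OF T S(1)] by auto
  have l: "lam S permutes U" using lam(1)[OF SU] .
  have "map (lam S) v \<in> ks f" using S(2) by (simp add: in_keys_iff)
  moreover have "lam S z \<in> U" using permutes_in_image[OF l] z by blast
  ultimately have "count_list (map (lam S) v) (lam S z) = 1" using ml by blast
  then show "count_list v z = 1" using permutes_inj[OF l] by (simp add: count_list_map_conv)
qed

lemma R_CAP:
  assumes T: "T \<subseteq> Y" "T \<noteq> {}"
  shows "R T \<in> CAP (Suc (length xs))"
proof -
  obtain t where t: "t \<in> T" using T(2) by blast
  have tX: "t \<notin> X" using t T(1) disj by blast
  let ?zs = "t # xs"
  have d: "distinct ?zs" using tX dist by simp
  have l: "length ?zs = Suc (length xs)" by simp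
  have zsU: "set ?zs \<subseteq> X \<union> T" using t by auto
  show ?thesis unfolding CAP_def
  proof (rule alt_in_CAP[OF d l])
    show "\<forall>v\<in>ks (R T). \<forall>z\<in>set ?zs. count_list v z = 1"
      using R_ml[OF T(1)] zsU T(1) by blast
    show "\<forall>a b v. a \<in> set ?zs \<longrightarrow> b \<in> set ?zs \<longrightarrow> a \<noteq> b \<longrightarrow>
          lk (R T) (map (Transposition.transpose a b) v) = - lk (R T) v"
    proof (intro allI impI)
      fix a b v assume ab: "a \<in> set ?zs" "b \<in> set ?zs" "a \<noteq> b"
      have "Transposition.transpose a b permutes (X \<union> T)"
        using ab zsU by (intro permutes_swap_id) auto
      then show "lk (R T) (map (Transposition.transpose a b) v) = - lk (R T) v"
        using R_alt[OF T(1)] ab(3) by (simp add: sign_swap_id)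
    qed
  qed
qed

lemma R_empty: "lk (R {}) v = lk f v"
proof -
  have "SS {} = {X}"
  proof
    show "SS {} \<subseteq> {X}"
    proof
      fix S assume "S \<in> SS {}"
      then have "S \<subseteq> X" "card S = card X" by (auto simp: SS_def)
      then show "S \<in> {X}" using card_subset_eq[of X S] by simp
    qed
  qed (simp add: SS_def)
  moreover have XU: "X \<subseteq> U" "card X = card X" by auto
  ultimately have "lk (R {}) v = of_int (sign (lam X)) * lk f (map (lam X) v)"
    using lkR[of "{}"] by simp
  also have "\<dots> = of_int (sign (lam X)) * (of_int (sign (lam X)) * lk f v)"
    using pres[OF lam(1)[OF XU] lam(3)[OF XU]] by simp
  also have "\<dots> = lk f v" by (simp add: sign_sq mult.assoc[symmetric])
  finally show ?thesis .
qed

definition \<omega> where "\<omega> = swap_xy xs ys"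

lemma omega: "\<And>z. \<omega> (\<omega> z) = z" "\<omega> ` X = Y" "permutation \<omega>" "sign \<omega> = (-1) ^ length xs"
  using swap_xy_props[OF len dist] by (auto simp: \<omega>_def)

lemma omega_perm: "\<omega> permutes U"
proof (rule involution_permutes[OF omega(1)])
  fix z assume "z \<notin> U"
  then show "\<omega> z = z" unfolding \<omega>_def using swap_xy_range[OF _ len, of z] by blast
qed

lemma mobius:
  "(\<Sum>T\<in>Pow Y. of_int ((-1::int) ^ card T) * lk (R T) v) = lk f (map \<omega> v)"
proof -
  define SA where "SA = {S. S \<subseteq> U \<and> card S = card X}"
  have finSA: "finite SA" by (rule finite_subset[of _ "Pow U"]) (auto simp: SA_def)
  let ?a = "\<lambda>S. of_int (sign (lam S)) * lk f (map (lam S) v)"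
  have SSe: "SS T = {S \<in> SA. S \<inter> Y \<subseteq> T}" if "T \<subseteq> Y" for T
    using that disj by (auto simp: SS_def SA_def)
  have "(\<Sum>T\<in>Pow Y. of_int ((-1::int) ^ card T) * lk (R T) v) =
        (\<Sum>T\<in>Pow Y. \<Sum>S\<in>SA. of_int ((-1::int) ^ card T) * (if S \<inter> Y \<subseteq> T then ?a S else 0))"
  proof (rule sum.cong[OF refl])
    fix T assume "T \<in> Pow Y"
    then have T: "T \<subseteq> Y" by simp
    have "lk (R T) v = (\<Sum>S\<in>{S \<in> SA. S \<inter> Y \<subseteq> T}. ?a S)" using lkR[OF T] SSe[OF T] by simp
    also have "\<dots> = (\<Sum>S\<in>SA. if S \<inter> Y \<subseteq> T then ?a S else 0)"
      by (rule sum.inter_filter[OF finSA])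
    finally show "of_int ((-1::int) ^ card T) * lk (R T) v =
          (\<Sum>S\<in>SA. of_int ((-1::int) ^ card T) * (if S \<inter> Y \<subseteq> T then ?a S else 0))"
      by (simp add: sum_distrib_left)
  qed
  also have "\<dots> = (\<Sum>S\<in>SA. \<Sum>T\<in>Pow Y. of_int ((-1::int) ^ card T) * (if S \<inter> Y \<subseteq> T then ?a S else 0))"
    by (rule sum.swap)
  also have "\<dots> = (\<Sum>S\<in>SA. ?a S * of_int (if S \<inter> Y = Y then (-1) ^ card Y else 0))"
  proof (rule sum.cong[OF refl])
    fix S assume "S \<in> SA"
    have "(\<Sum>T\<in>Pow Y. of_int ((-1::int) ^ card T) * (if S \<inter> Y \<subseteq> T then ?a S else 0)) =
          (\<Sum>T\<in>Pow Y. ?a S * of_int (if S \<inter> Y \<subseteq> T then (-1::int) ^ card T else 0))"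
      by (intro sum.cong refl) simp
    also have "\<dots> = ?a S * of_int (\<Sum>T\<in>Pow Y. if S \<inter> Y \<subseteq> T then (-1::int) ^ card T else 0)"
      by (simp add: sum_distrib_left)
    also have "(\<Sum>T\<in>Pow Y. if S \<inter> Y \<subseteq> T then (-1::int) ^ card T else 0) =
               (\<Sum>T\<in>{T. S \<inter> Y \<subseteq> T \<and> T \<subseteq> Y}. (-1::int) ^ card T)"
    proof -
      have "{T \<in> Pow Y. S \<inter> Y \<subseteq> T} = {T. S \<inter> Y \<subseteq> T \<and> T \<subseteq> Y}" by auto
      then show ?thesis using sum.inter_filter[of "Pow Y" "\<lambda>T. (-1::int) ^ card T" "\<lambda>T. S \<inter> Y \<subseteq> T"]
        by simp
    qed
    also have "\<dots> = (if S \<inter> Y = Y then (-1) ^ card Y else 0)"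
      by (rule sum_supersets_alt) auto
    finally show "(\<Sum>T\<in>Pow Y. of_int ((-1::int) ^ card T) * (if S \<inter> Y \<subseteq> T then ?a S else 0)) =
          ?a S * of_int (if S \<inter> Y = Y then (-1) ^ card Y else 0)" .
  qed
  also have "\<dots> = (\<Sum>S\<in>SA. if S = Y then ?a Y * of_int ((-1) ^ card Y) else 0)"
  proof (rule sum.cong[OF refl])
    fix S assume "S \<in> SA"
    then have "S \<subseteq> U" "card S = card Y" using cardX cardY by (auto simp: SA_def)
    moreover have "finite S" using \<open>S \<subseteq> U\<close> finite_subset by blast
    ultimately have "S \<inter> Y = Y \<longleftrightarrow> S = Y"
      using card_subset_eq[of S Y] by auto
    then show "?a S * of_int (if S \<inter> Y = Y then (-1) ^ card Y else 0) =
               (if S = Y then ?a Y * of_int ((-1) ^ card Y) else 0)" by auto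
  qed
  also have "\<dots> = ?a Y * of_int ((-1) ^ card Y)"
  proof -
    have "Y \<in> SA" using cardX cardY by (simp add: SA_def)
    then show ?thesis using finSA by simp
  qed
  also have "\<dots> = lk f (map \<omega> v)"
  proof -
    have YU: "Y \<subseteq> U" "card Y = card X" using cardX cardY by auto
    define g where "g = lam Y \<circ> \<omega>"
    have gU: "g permutes U" unfolding g_def by (intro permutes_compose omega_perm lam(1)[OF YU])
    have gX: "g ` X = X" unfolding g_def by (simp only: image_comp[symmetric] omega(2) lam(4)[OF YU])
    have pl: "permutation (lam Y)" using lam(1)[OF YU] by (rule permutes_imp_permutation[OF finU])
    have sg: "sign g = sign (lam Y) * sign \<omega>" unfolding g_def by (simp add: sign_compose pl omega(3))
    have eq: "map (lam Y) v = map g (map \<omega> v)" by (simp add: g_def omega(1))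
    have "lk f (map (lam Y) v) = of_int (sign g) * lk f (map \<omega> v)" unfolding eq by (rule pres[OF gU gX])
    then have "?a Y * of_int ((-1) ^ card Y) =
          (of_int (sign (lam Y)) * of_int (sign (lam Y))) * (of_int (sign \<omega>) * of_int ((-1) ^ card Y)) * lk f (map \<omega> v)"
      by (simp add: sg algebra_simps)
    also have "\<dots> = lk f (map \<omega> v)"
      by (simp add: sign_sq omega(4) cardY power_mult_distrib[symmetric] flip: of_int_mult)
    finally show ?thesis .
  qed
  finally show ?thesis .
qed

theorem main: "f - frename \<omega> f \<in> CAP (Suc (length xs))"
proof -
  define Q where "Q = (\<Sum>T\<in>Pow Y - {{}}. fmul (fconst (- of_int ((-1::int) ^ card T))) (R T))"
  have QC: "Q \<in> CAP (Suc (length xs))" unfolding Q_def CAP_def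
    by (rule Tideal_sum) (auto intro!: Tideal.lmul R_CAP[unfolded CAP_def])
  have "f - frename \<omega> f = Q"
  proof (rule poly_mapping_eqI)
    fix v
    have fin: "finite (Pow Y)" by simp
    have "(\<Sum>T\<in>Pow Y. of_int ((-1::int) ^ card T) * lk (R T) v) =
          of_int ((-1::int) ^ card {}) * lk (R {}) v + (\<Sum>T\<in>Pow Y - {{}}. of_int ((-1::int) ^ card T) * lk (R T) v)"
      using sum.remove[OF fin, of "{}" "\<lambda>T. of_int ((-1::int) ^ card T) * lk (R T) v"] by simp
    then have "lk f (map \<omega> v) = lk f v + (\<Sum>T\<in>Pow Y - {{}}. of_int ((-1::int) ^ card T) * lk (R T) v)"
      using mobius R_empty by simp
    moreover have "lk Q v = - (\<Sum>T\<in>Pow Y - {{}}. of_int ((-1::int) ^ card T) * lk (R T) v)"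
      by (simp add: Q_def lookup_sum lookup_fmul_fconst sum_negf)
    moreover have "lk (frename \<omega> f) v = lk f (map \<omega> v)" by (rule lookup_frename[OF omega(1)])
    ultimately show "lk (f - frename \<omega> f) v = lk Q v" by (simp add: lookup_minus)
  qed
  then show ?thesis using QC by simp
qed

end


lemma alt_conv:
  assumes "alternating_in zs f" "distinct zs" "a \<in> set zs" "b \<in> set zs" "a \<noteq> b"
  shows "lk f (map (Transposition.transpose a b) v) = - lk f v"
proof -
  obtain i where i: "i < length zs" "zs ! i = a" using assms(3) by (metis in_set_conv_nth)
  obtain j where j: "j < length zs" "zs ! j = b" using assms(4) by (metis in_set_conv_nth)
  have "i \<noteq> j" using i j assms(5) by auto
  then have "frename (vswap a b) f = - f" using assms(1) i j by (auto simp: alternating_in_def)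
  then have "lk (frename (Transposition.transpose a b) f) v = lk (- f) v" by (simp add: vswap_transpose)
  moreover have "lk (frename (Transposition.transpose a b) f) v = lk f (map (Transposition.transpose a b) v)"
    by (rule lookup_frename) (simp add: Transposition.transpose_def)
  ultimately show ?thesis by simp
qed

theorem lemma2p38:
  fixes xs ys :: "nat list" and n :: nat and f :: "'c::comm_ring_1 fpoly"
  assumes "length xs = n" and "length ys = n" and "distinct (xs @ ys)"
    and "doubly_alternating xs ys f"
  shows "f - frename (swap_xy xs ys) f \<in> CAP (Suc n)"
proof -
  have ml: "multilinear_in (xs @ ys) f" and aX: "alternating_in xs f" and aY: "alternating_in ys f"
    using assms(4) by (auto simp: doubly_alternating_def)
  have dX: "distinct xs" and dY: "distinct ys" using assms(3) by auto
  interpret D: DA xs ys f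
  proof
    show "length xs = length ys" using assms(1,2) by simp
    show "distinct (xs @ ys)" by (rule assms(3))
    show "\<forall>v\<in>ks f. \<forall>z\<in>set xs \<union> set ys. count_list v z = 1"
      using ml by (simp add: multilinear_in_def)
  qed (auto intro: alt_conv[OF aX dX] alt_conv[OF aY dY])
  show ?thesis using D.main by (simp add: D.\<omega>_def assms(1))
qed

end
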